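(* Let $S$ be an infinite supernatural number and let $\lambda$ be a non-archimedean length function on $\widetilde{\mathbb Z_S}$. Then there exist a scale $s=(s_m)_{m\ge1}$ for $S$ and an increasing sequence $l=(l_m)_{m\ge1}$ of numbers in $(1,\infty)$ with $\lim_{m\to\infty}l_m=\infty$ such that $\lambda=\lambda_{s,l}$.
   Context: $\widetilde{\mathbb Z_S}=\{z\in\mathbb C: z^s=1\text{ for some natural number } s\mid S\}$. A non-archimedean length function on $\widetilde{\mathbb Z_S}$ is a function $\lambda:\widetilde{\mathbb Z_S}\to[1,\infty)$ such that (i) $\lambda(z)=1$ iff $z=1$; (ii) $\lambda(z_1z_2)\le\max\{\lambda(z_1),\lambda(z_2)\}$; (iii) for every $r\ge1$ the set $\{z:\lambda(z)\le r\}$ is finite. A scale for $S$ is a sequence of positive integers $(s_m)_{m\ge1}$ with $s_m\mid s_{m+1}$, $s_m<s_{m+1}$, $S=\mathrm{lcm}(s_m)$; set $s_0:=1$, $l_0:=1$. Every $z\ne1$ in $\widetilde{\mathbb Z_S}$ is uniquely $z=e^{2\pi ij/s_m}$ with $m\ge1$, $0<j<s_m$, $s_m/s_{m-1}\nmid j$, and $\lambda_{s,l}$ is defined by $\lambda_{s,l}(1)=1$ and $\lambda_{s,l}(e^{2\pi ij/s_m})=l_m$ for such $z$. *)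

theory Defs
  imports Complex_Main "HOL-Library.Extended_Nat" "HOL-Computational_Algebra.Primes"
begin

text \<open>A supernatural number is represented by its exponent function
  S :: nat \<Rightarrow> enat, where S p is the exponent of the prime p (values at
  non-primes are ignored).\<close>

definition supnat_dvd :: "nat \<Rightarrow> (nat \<Rightarrow> enat) \<Rightarrow> bool" where
  "supnat_dvd s S \<longleftrightarrow> s > 0 \<and> (\<forall>p. prime p \<longrightarrow> enat (multiplicity p s) \<le> S p)"

definition supnat_infinite :: "(nat \<Rightarrow> enat) \<Rightarrow> bool" where
  "supnat_infinite S \<longleftrightarrow>
     \<not> (\<exists>n>0. \<forall>p. prime p \<longrightarrow> S p = enat (multiplicity p n))"

definition ZS :: "(nat \<Rightarrow> enat) \<Rightarrow> complex set" where
  "ZS S = {z. \<exists>s. supnat_dvd s S \<and> z ^ s = 1}"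

definition nonarch_length :: "(nat \<Rightarrow> enat) \<Rightarrow> (complex \<Rightarrow> real) \<Rightarrow> bool" where
  "nonarch_length S lam \<longleftrightarrow>
     (\<forall>z\<in>ZS S. lam z \<ge> 1) \<and>
     (\<forall>z\<in>ZS S. lam z = 1 \<longleftrightarrow> z = 1) \<and>
     (\<forall>z1\<in>ZS S. \<forall>z2\<in>ZS S. lam (z1 * z2) \<le> max (lam z1) (lam z2)) \<and>
     (\<forall>r\<ge>1. finite {z\<in>ZS S. lam z \<le> r})"

text \<open>Scale (s_m)_{m \<ge> 1}; the value s 0 is ignored.  lcm(s_m) = S means
  that for every prime the supremum of the exponents equals that of S.\<close>
definition is_scale :: "(nat \<Rightarrow> enat) \<Rightarrow> (nat \<Rightarrow> nat) \<Rightarrow> bool" where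
  "is_scale S s \<longleftrightarrow>
     (\<forall>m\<ge>1. s m > 0 \<and> s m dvd s (Suc m) \<and> s m < s (Suc m)) \<and>
     (\<forall>p. prime p \<longrightarrow> (SUP m\<in>{1..}. enat (multiplicity p (s m))) = S p)"

definition scale_prev :: "(nat \<Rightarrow> nat) \<Rightarrow> nat \<Rightarrow> nat" where
  "scale_prev s m = (if m \<le> 1 then 1 else s (m - 1))"

definition scale_rep :: "(nat \<Rightarrow> nat) \<Rightarrow> nat \<Rightarrow> nat \<Rightarrow> complex \<Rightarrow> bool" where
  "scale_rep s m j z \<longleftrightarrow> m \<ge> 1 \<and> 0 < j \<and> j < s m \<and>
     \<not> (s m div scale_prev s m) dvd j \<and>
     z = exp (2 * pi * \<i> * of_nat j / of_nat (s m))"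

definition lambda_sl :: "(nat \<Rightarrow> nat) \<Rightarrow> (nat \<Rightarrow> real) \<Rightarrow> complex \<Rightarrow> real" where
  "lambda_sl s l z = (if z = 1 then 1 else l (THE m. \<exists>j. scale_rep s m j z))"

end

theory Submission
  imports Defs "HOL-Analysis.Analysis"
begin

definition zeta :: "nat \<Rightarrow> nat \<Rightarrow> complex" where
  "zeta n j = exp (2 * of_real pi * \<i> * of_nat j / of_nat n)"

lemma zeta_def': "exp (complex_of_real (2 * pi) * \<i> * of_nat j / of_nat n) = zeta n j"
  by (simp add: zeta_def)

lemma zeta_pow: "zeta n j ^ k = zeta n (j * k)"
proof -
  have "zeta n j ^ k = exp (of_nat k * (2 * of_real pi * \<i> * of_nat j / of_nat n))"
    unfolding zeta_def by (rule exp_of_nat_mult[symmetric])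
  also have "\<dots> = zeta n (j * k)" unfolding zeta_def by (simp add: algebra_simps)
  finally show ?thesis .
qed

lemma zeta_pow_1: "n \<ge> 1 \<Longrightarrow> zeta n j ^ k = 1 \<longleftrightarrow> n dvd j * k"
  unfolding zeta_pow unfolding zeta_def by (rule complex_root_unity_eq_1)

lemma zeta_root: "n \<ge> 1 \<Longrightarrow> zeta n j ^ n = 1"
  using zeta_pow_1 by simp

lemma roots_zeta: "n \<ge> 1 \<Longrightarrow> z ^ n = 1 \<Longrightarrow> \<exists>j<n. z = zeta n j"
  using complex_roots_unity[of n] unfolding zeta_def by auto

lemma fin_group_roots:
  fixes G :: "complex set"
  assumes fin: "finite G" and one: "1 \<in> G" and nz: "0 \<notin> G"
    and mul: "\<And>x y. x \<in> G \<Longrightarrow> y \<in> G \<Longrightarrow> x * y \<in> G"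
  shows "G = {z. z ^ card G = 1}"
proof -
  have pos: "card G > 0" using fin one card_gt_0_iff by blast
  have sub: "G \<subseteq> {z. z ^ card G = 1}"
  proof
    fix g assume g: "g \<in> G"
    have g0: "g \<noteq> 0" using g nz by auto
    have inj: "inj_on (\<lambda>x. g * x) G" using g0 by (auto simp: inj_on_def)
    have im: "(\<lambda>x. g * x) ` G = G"
    proof (rule card_subset_eq[OF fin])
      show "(\<lambda>x. g * x) ` G \<subseteq> G" using mul g by auto
      show "card ((\<lambda>x. g * x) ` G) = card G" using card_image[OF inj] .
    qed
    have "prod (\<lambda>x. x) G = prod (\<lambda>x. x) ((\<lambda>x. g * x) ` G)" using im by simp
    also have "\<dots> = prod (\<lambda>x. g * x) G" using prod.reindex[OF inj] by simp
    also have "\<dots> = g ^ card G * prod (\<lambda>x. x) G" by (simp add: prod.distrib)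
    finally have "g ^ card G * prod (\<lambda>x. x) G = 1 * prod (\<lambda>x. x) G" by simp
    moreover have "prod (\<lambda>x. x) G \<noteq> 0" using fin nz by (simp add: prod_zero_iff)
    ultimately have "g ^ card G = 1" by (metis mult_cancel_right)
    then show "g \<in> {z. z ^ card G = 1}" by simp
  qed
  show ?thesis
    by (rule card_subset_eq[OF _ sub]) (use pos finite_roots_unity in \<open>auto simp: card_roots_unity_eq\<close>)
qed

lemma ZS_one: "1 \<in> ZS S"
  unfolding ZS_def supnat_dvd_def by (rule CollectI, rule exI[of _ 1]) (simp add: zero_enat_def[symmetric])

lemma ZS_nz: "z \<in> ZS S \<Longrightarrow> z \<noteq> 0"
  unfolding ZS_def supnat_dvd_def by (auto simp: zero_power)

lemma ZS_mult:
  assumes "z1 \<in> ZS S" "z2 \<in> ZS S" shows "z1 * z2 \<in> ZS S"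
proof -
  obtain s1 where s1: "supnat_dvd s1 S" "z1 ^ s1 = 1" using assms(1) unfolding ZS_def by auto
  obtain s2 where s2: "supnat_dvd s2 S" "z2 ^ s2 = 1" using assms(2) unfolding ZS_def by auto
  have p1: "s1 > 0" and p2: "s2 > 0" using s1 s2 unfolding supnat_dvd_def by auto
  have "supnat_dvd (lcm s1 s2) S"
    unfolding supnat_dvd_def
  proof (intro conjI allI impI)
    show "lcm s1 s2 > 0" using p1 p2 by (simp add: lcm_pos_nat)
    fix p :: nat assume p: "prime p"
    have "multiplicity p (lcm s1 s2) = max (multiplicity p s1) (multiplicity p s2)"
      using multiplicity_lcm[of s1 s2 p] p1 p2 p by simp
    then show "enat (multiplicity p (lcm s1 s2)) \<le> S p"
      using s1(1) s2(1) p unfolding supnat_dvd_def by (simp add: max_def)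
  qed
  moreover have "(z1 * z2) ^ lcm s1 s2 = 1"
  proof -
    obtain a where a: "lcm s1 s2 = s1 * a" using dvd_lcm1 by (metis dvdE)
    obtain b where b: "lcm s1 s2 = s2 * b" using dvd_lcm2 by (metis dvdE)
    have "z1 ^ lcm s1 s2 = 1" by (simp add: a power_mult s1)
    moreover have "z2 ^ lcm s1 s2 = 1" by (simp add: b power_mult s2)
    ultimately show ?thesis by (simp add: power_mult_distrib)
  qed
  ultimately show ?thesis unfolding ZS_def by auto
qed

lemma ZS_order:
  assumes "zeta n 1 \<in> ZS S" "n \<ge> 1" "prime p"
  shows "enat (multiplicity p n) \<le> S p"
proof -
  obtain s where s: "supnat_dvd s S" "zeta n 1 ^ s = 1" using assms(1) unfolding ZS_def by auto
  have "n dvd s" using s(2) zeta_pow_1[OF assms(2)] by simp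
  moreover have "s > 0" using s(1) unfolding supnat_dvd_def by auto
  ultimately have "multiplicity p n \<le> multiplicity p s"
    by (intro dvd_imp_multiplicity_le) auto
  then show ?thesis using s(1) assms(3) unfolding supnat_dvd_def
    by (meson enat_ord_simps(1) order_trans)
qed

lemma ZS_prime_power:
  assumes "prime p" "enat k \<le> S p"
  shows "zeta (p ^ k) 1 \<in> ZS S \<and> (\<forall>N. zeta (p ^ k) 1 ^ N = 1 \<longrightarrow> p ^ k dvd N)"
proof -
  have pk: "p ^ k \<ge> 1" using prime_gt_0_nat[OF assms(1)] by (simp add: Suc_le_eq)
  have "supnat_dvd (p ^ k) S"
    unfolding supnat_dvd_def
  proof (intro conjI allI impI)
    show "p ^ k > 0" using pk by linarith
    fix q :: nat assume q: "prime q"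
    show "enat (multiplicity q (p ^ k)) \<le> S q"
    proof (cases "q = p")
      case True then show ?thesis using assms by simp
    next
      case False then show ?thesis using multiplicity_distinct_prime_power[OF q assms(1)] by (simp add: zero_enat_def[symmetric])
    qed
  qed
  then have "zeta (p ^ k) 1 \<in> ZS S" unfolding ZS_def using zeta_root[OF pk] by auto
  moreover have "\<forall>N. zeta (p ^ k) 1 ^ N = 1 \<longrightarrow> p ^ k dvd N" using zeta_pow_1[OF pk] by simp
  ultimately show ?thesis by blast
qed

lemma enat_le_from_fin:
  fixes x y :: enat
  assumes "\<And>k. enat k \<le> x \<Longrightarrow> enat k \<le> y"
  shows "x \<le> y"
proof (cases x)
  case (enat n) then show ?thesis using assms by simp
next
  case infinity
  then have "\<And>k. enat k \<le> y" using assms by simp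
  show ?thesis
  proof (cases y)
    case (enat m) then show ?thesis using \<open>\<And>k. enat k \<le> y\<close>[of "Suc m"] by simp
  qed simp
qed

theorem mainTheorem4:
  fixes S :: "nat \<Rightarrow> enat" and lam :: "complex \<Rightarrow> real"
  assumes "supnat_infinite S"
    and "nonarch_length S lam"
  shows "\<exists>s l. is_scale S s \<and>
           (\<forall>m\<ge>1. l m > 1 \<and> l m < l (Suc m)) \<and>
           filterlim l at_top sequentially \<and>
           (\<forall>z\<in>ZS S. lam z = lambda_sl s l z)"
proof -
  define Z where "Z = ZS S"
  define V where "V = lam ` Z"
  define G where "G r = {z\<in>Z. lam z \<le> r}" for r
  have ge1: "\<And>z. z \<in> Z \<Longrightarrow> lam z \<ge> 1" using assms(2) unfolding nonarch_length_def Z_def by auto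
  have eq1: "\<And>z. z \<in> Z \<Longrightarrow> lam z = 1 \<longleftrightarrow> z = 1" using assms(2) unfolding nonarch_length_def Z_def by auto
  have ultra: "\<And>z1 z2. z1 \<in> Z \<Longrightarrow> z2 \<in> Z \<Longrightarrow> lam (z1 * z2) \<le> max (lam z1) (lam z2)"
    using assms(2) unfolding nonarch_length_def Z_def by auto
  have finG: "\<And>r. r \<ge> 1 \<Longrightarrow> finite (G r)" using assms(2) unfolding nonarch_length_def Z_def G_def by auto
  have finG': "finite (G r)" for r
  proof -
    have "G r \<subseteq> G (max r 1)" unfolding G_def by auto
    then show ?thesis using finG[of "max r 1"] finite_subset by auto
  qed
  have one: "1 \<in> Z" unfolding Z_def by (rule ZS_one)
  have lam1: "lam 1 = 1" using eq1 one by simp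
  have Zmul: "\<And>x y. x \<in> Z \<Longrightarrow> y \<in> Z \<Longrightarrow> x * y \<in> Z" unfolding Z_def by (rule ZS_mult)
  have Znz: "0 \<notin> Z" unfolding Z_def using ZS_nz by blast
  have Ggrp: "G r = {z. z ^ card (G r) = 1} \<and> card (G r) \<ge> 1" if r: "r \<ge> 1" for r
  proof -
    have "G r = {z. z ^ card (G r) = 1}"
    proof (rule fin_group_roots[OF finG'])
      show "1 \<in> G r" using one lam1 r unfolding G_def by auto
      show "0 \<notin> G r" using Znz unfolding G_def by auto
      fix x y assume "x \<in> G r" "y \<in> G r"
      then show "x * y \<in> G r" using Zmul ultra unfolding G_def by fastforce
    qed
    moreover have "card (G r) \<ge> 1"
      using finG' one lam1 r unfolding G_def by (metis (mono_tags, lifting) One_nat_def Suc_leI card_gt_0_iff empty_iff mem_Collect_eq)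
    ultimately show ?thesis by blast
  qed
  have Gmono: "r \<le> r' \<Longrightarrow> G r \<subseteq> G r'" for r r' unfolding G_def by auto
  have ppow: "\<exists>z\<in>Z. \<forall>N. z ^ N = 1 \<longrightarrow> p ^ k dvd N" if "prime p" "enat k \<le> S p" for p k
    using ZS_prime_power[of p k S] that unfolding Z_def by blast
  have unb: "\<exists>x\<in>V. x > a" for a
  proof (rule ccontr)
    assume "\<not> ?thesis"
    then have bd: "\<And>z. z \<in> Z \<Longrightarrow> lam z \<le> max a 1" unfolding V_def by force
    have ZG: "Z = G (max a 1)" unfolding G_def using bd by auto
    define N where "N = card Z"
    have ZN: "Z = {z. z ^ N = 1}" and N1: "N \<ge> 1" using Ggrp[of "max a 1"] ZG N_def by auto
    have "\<forall>p. prime p \<longrightarrow> S p = enat (multiplicity p N)"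
    proof (intro allI impI antisym)
      fix p :: nat assume p: "prime p"
      show "enat (multiplicity p N) \<le> S p"
        using ZS_order[OF _ N1 p] zeta_root[OF N1] ZN unfolding Z_def by auto
      show "S p \<le> enat (multiplicity p N)"
      proof (rule enat_le_from_fin)
        fix k assume k: "enat k \<le> S p"
        obtain z where z: "z \<in> Z" "\<forall>N. z ^ N = 1 \<longrightarrow> p ^ k dvd N" using ppow[OF p k] by blast
        have "p ^ k dvd N" using z ZN by auto
        then show "enat k \<le> enat (multiplicity p N)" using multiplicity_geI[of N p k] N1 p not_prime_unit by auto
      qed
    qed
    then show False using assms(1) N1 unfolding supnat_infinite_def by (metis One_nat_def Suc_le_eq)
  qed
  define nxt where "nxt a = (SOME x. x \<in> V \<and> a < x \<and> (\<forall>y\<in>V. a < y \<longrightarrow> x \<le> y))" for a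
  have nxt: "nxt a \<in> V \<and> a < nxt a \<and> (\<forall>y\<in>V. a < y \<longrightarrow> nxt a \<le> y)" for a
  proof -
    obtain w where w: "w \<in> V" "w > a" using unb by blast
    define T where "T = {y\<in>V. a < y \<and> y \<le> w}"
    have "T \<subseteq> lam ` G w" unfolding T_def V_def G_def by auto
    then have fT: "finite T" using finG' finite_subset by blast
    have neT: "T \<noteq> {}" using w unfolding T_def by auto
    have "\<exists>x. x \<in> V \<and> a < x \<and> (\<forall>y\<in>V. a < y \<longrightarrow> x \<le> y)"
    proof (intro exI conjI)
      show "Min T \<in> V" "a < Min T" using Min_in[OF fT neT] unfolding T_def by auto
      show "\<forall>y\<in>V. a < y \<longrightarrow> Min T \<le> y"
      proof (intro ballI impI)
        fix y assume "y \<in> V" "a < y"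
        show "Min T \<le> y"
        proof (cases "y \<le> w")
          case True then show ?thesis using Min_le[OF fT] \<open>y \<in> V\<close> \<open>a < y\<close> unfolding T_def by auto
        next
          case False then show ?thesis using Min_le[OF fT, of w] w unfolding T_def by auto
        qed
      qed
    qed
    then show ?thesis unfolding nxt_def by (rule someI_ex)
  qed
  define v where "v = rec_nat 1 (\<lambda>_ x. nxt x)"
  have v0: "v 0 = 1" and vS: "v (Suc m) = nxt (v m)" for m unfolding v_def by simp_all
  have vV: "v m \<in> V" for m
    by (cases m) (use one lam1 nxt vS v0 in \<open>auto simp: V_def\<close>)
  have vsm: "strict_mono v" by (rule strict_mono_Suc_iff[THEN iffD2]) (use nxt vS in auto)
  have vle: "v m \<le> v m' \<longleftrightarrow> m \<le> m'" for m m' using vsm by (simp add: strict_mono_less_eq)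
  have vlt: "v m < v m' \<longleftrightarrow> m < m'" for m m' using vsm by (simp add: strict_mono_less)
  have vinj: "inj v" using vsm strict_mono_imp_inj_on by blast
  have vfin: "finite {m. v m \<le> r}" for r
  proof -
    have "v ` {m. v m \<le> r} \<subseteq> lam ` G r"
    proof
      fix x assume "x \<in> v ` {m. v m \<le> r}"
      then obtain m where "x = v m" "v m \<le> r" by auto
      moreover obtain z where "z \<in> Z" "v m = lam z" using vV[of m] unfolding V_def by auto
      ultimately show "x \<in> lam ` G r" unfolding G_def by auto
    qed
    then have "finite (v ` {m. v m \<le> r})" using finG' finite_subset by blast
    then show ?thesis using vinj finite_imageD inj_on_subset by blast
  qed
  have Vv: "\<exists>m. x = v m" if x: "x \<in> V" for x
  proof -
    define A where "A = {m. v m \<le> x}"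
    have fA: "finite A" using vfin unfolding A_def .
    have "0 \<in> A" unfolding A_def using v0 x ge1 unfolding V_def by auto
    define m where "m = Max A"
    have "m \<in> A" unfolding m_def using Max_in[OF fA] \<open>0 \<in> A\<close> by auto
    then have vm: "v m \<le> x" unfolding A_def by simp
    have "Suc m \<notin> A" unfolding m_def using Max_ge[OF fA] by fastforce
    then have "x < nxt (v m)" unfolding A_def using vS by auto
    then have "\<not> v m < x" using nxt x by force
    then show ?thesis using vm by auto
  qed
  have lim: "filterlim v at_top sequentially"
  proof (subst filterlim_at_top, intro allI)
    fix r :: real
    obtain M where M: "\<not> v M \<le> r"
      using vfin[of r] by (metis (mono_tags, lifting) finite_nat_set_iff_bounded_le le_Suc_eq mem_Collect_eq not_less_eq_eq)
    show "eventually (\<lambda>m. r \<le> v m) sequentially"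
      unfolding eventually_sequentially using M vle by (meson linear order_trans)
  qed
  define s where "s m = card (G (v m))" for m
  have v1: "v m \<ge> 1" for m using vle[of 0 m] v0 by simp
  have Gs: "G (v m) = {z. z ^ s m = 1}" and s1: "s m \<ge> 1" for m using Ggrp[OF v1] s_def by auto
  have s0: "s 0 = 1"
  proof -
    have "G (v 0) = {1}" using v0 one lam1 eq1 ge1 unfolding G_def by force
    then show ?thesis unfolding s_def by simp
  qed
  have sprev: "scale_prev s m = s (m - 1)" if "m \<ge> 1" for m
    using that s0 unfolding scale_prev_def by (cases "m = 1") auto
  have zG: "zeta (s m) j \<in> G (v m)" for m j
    using Gs zeta_pow_1[OF s1] by auto
  have sdvd: "s m dvd s m'" if "m \<le> m'" for m m'
  proof -
    have "zeta (s m) 1 \<in> G (v m')" using zG Gmono[of "v m" "v m'"] that vle by blast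
    then show ?thesis using Gs[of m'] zeta_pow_1[OF s1] by simp
  qed
  have sless: "s m < s (Suc m)" for m
  proof -
    obtain z where z: "z \<in> Z" "lam z = v (Suc m)" using vV[of "Suc m"] unfolding V_def by auto
    have "z \<in> G (v (Suc m))" "z \<notin> G (v m)" using z vlt[of m "Suc m"] unfolding G_def by auto
    then have "G (v m) \<subset> G (v (Suc m))" using Gmono[of "v m" "v (Suc m)"] vle by auto
    then show ?thesis unfolding s_def using psubset_card_mono finG' by blast
  qed
  have scale: "is_scale S s"
    unfolding is_scale_def
  proof (intro conjI allI impI)
    fix m :: nat assume "m \<ge> 1"
    show "s m > 0" using s1[of m] by simp
    show "s m dvd s (Suc m)" using sdvd by simp
    show "s m < s (Suc m)" using sless .
  next
    fix p :: nat assume p: "prime p"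
    show "(SUP m\<in>{1..}. enat (multiplicity p (s m))) = S p"
    proof (rule antisym)
      show "(SUP m\<in>{1..}. enat (multiplicity p (s m))) \<le> S p"
      proof (rule SUP_least)
        fix m :: nat
        have "zeta (s m) 1 \<in> Z" using zG unfolding G_def by auto
        then show "enat (multiplicity p (s m)) \<le> S p" using ZS_order[OF _ s1 p] unfolding Z_def by simp
      qed
      show "S p \<le> (SUP m\<in>{1..}. enat (multiplicity p (s m)))"
      proof (rule enat_le_from_fin)
        fix k assume k: "enat k \<le> S p"
        obtain z where z: "z \<in> Z" "\<forall>N. z ^ N = 1 \<longrightarrow> p ^ k dvd N" using ppow[OF p k] by blast
        obtain m where m: "lam z = v m" using Vv z(1) unfolding V_def by auto
        have "z \<in> G (v (Suc m))" using z m vle[of m "Suc m"] unfolding G_def by auto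
        then have "p ^ k dvd s (Suc m)" using Gs z(2) by auto
        then have "k \<le> multiplicity p (s (Suc m))" using multiplicity_geI[of "s (Suc m)" p k] s1[of "Suc m"] p not_prime_unit by auto
        then have "enat k \<le> enat (multiplicity p (s (Suc m)))" by simp
        also have "\<dots> \<le> (SUP m\<in>{1..}. enat (multiplicity p (s m)))" by (rule SUP_upper) auto
        finally show "enat k \<le> (SUP m\<in>{1..}. enat (multiplicity p (s m)))" .
      qed
    qed
  qed
  have lam_eq: "lam z = lambda_sl s v z" if z: "z \<in> Z" for z
  proof (cases "z = 1")
    case True then show ?thesis using lam1 unfolding lambda_sl_def by simp
  next
    case False
    obtain m where m: "lam z = v m" using Vv z unfolding V_def by auto
    have m1: "m \<ge> 1" using m eq1[OF z] False v0 by (cases m) auto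
    have notprev: "\<not> z ^ s (m' - 1) = 1" if "lam z > v (m' - 1)" for m'
    proof
      assume "z ^ s (m' - 1) = 1"
      then have "z \<in> G (v (m' - 1))" using Gs[of "m' - 1"] by auto
      then show False using that unfolding G_def by auto
    qed
    have ex: "\<exists>j. scale_rep s m j z"
    proof -
      have "z \<in> G (v m)" using z m unfolding G_def by auto
      then obtain j where j: "j < s m" "z = zeta (s m) j" using Gs roots_zeta[OF s1] by blast
      have j0: "j > 0" using j False unfolding zeta_def by (cases j) auto
      have nd: "\<not> (s m div s (m - 1)) dvd j"
      proof
        assume "(s m div s (m - 1)) dvd j"
        then obtain q where q: "j = (s m div s (m - 1)) * q" by blast
        have sd: "s (m - 1) dvd s m" using sdvd by simp
        have "j * s (m - 1) = s m * q" using q sd by (metis dvd_div_mult_self mult.assoc mult.commute)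
        then have "z ^ s (m - 1) = 1" using j zeta_pow_1[OF s1] by simp
        moreover have "lam z > v (m - 1)" using m vlt m1 by simp
        ultimately show False using notprev by blast
      qed
      show ?thesis unfolding scale_rep_def zeta_def' using m1 j j0 nd sprev[OF m1] by auto
    qed
    have uniq: "m' = m" if "scale_rep s m' j' z" for m' j'
    proof -
      have r: "m' \<ge> 1" "0 < j'" "j' < s m'" "\<not> (s m' div s (m' - 1)) dvd j'" "z = zeta (s m') j'"
        using that sprev unfolding scale_rep_def zeta_def' by auto
      have "z ^ s m' = 1" using r(5) zeta_root[OF s1] by simp
      then have "z \<in> G (v m')" using Gs z by auto
      then have up: "v m \<le> v m'" using m unfolding G_def by auto
      have low: "v (m' - 1) < v m"
      proof (rule ccontr)
        assume "\<not> ?thesis"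
        then have "z \<in> G (v (m' - 1))" using z m unfolding G_def by auto
        then have "z ^ s (m' - 1) = 1" using Gs by auto
        then have dv: "s m' dvd j' * s (m' - 1)" using r(5) zeta_pow_1[OF s1] by simp
        have sd: "s (m' - 1) dvd s m'" using sdvd by simp
        then obtain d where d: "s m' = s (m' - 1) * d" by blast
        have pos: "s (m' - 1) > 0" using s1 by (simp add: Suc_le_eq)
        have "s m' div s (m' - 1) = d" using d pos by simp
        moreover have "d dvd j'" using dv d pos by (simp add: mult.commute)
        ultimately show False using r(4) by simp
      qed
      have "m \<le> m'" using up vle by simp
      moreover have "m' - 1 < m" using low vlt by simp
      ultimately show ?thesis by simp
    qed
    have "(THE m'. \<exists>j. scale_rep s m' j z) = m"
      using ex uniq by (intro the_equality) auto
    then show ?thesis unfolding lambda_sl_def using False m by simp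
  qed
  show ?thesis
  proof (intro exI conjI)
    show "is_scale S s" by (rule scale)
    show "\<forall>m\<ge>1. v m > 1 \<and> v m < v (Suc m)" 
    proof (intro allI impI conjI)
      fix m :: nat assume "m \<ge> 1"
      then show "v m > 1" using vlt[of 0 m] v0 by simp
      show "v m < v (Suc m)" using vlt by simp
    qed
    show "filterlim v at_top sequentially" by (rule lim)
    show "\<forall>z\<in>ZS S. lam z = lambda_sl s v z" using lam_eq unfolding Z_def by blast
  qed
qed

end
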